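(* For every $(s_0,p_0)\in G_2$ one has $c_{G_2}\big((0,0),(s_0,p_0)\big)=\tilde k_{G_2}\big((0,0),(s_0,p_0)\big)$. *)

theory Defs
  imports "HOL-Analysis.Analysis"
begin

definition unit_disc :: "complex set" where
  "unit_disc = ball 0 1"

definition G2 :: "(complex \<times> complex) set" where
  "G2 = {(l1 + l2, l1 * l2) | l1 l2. l1 \<in> unit_disc \<and> l2 \<in> unit_disc}"

definition holomorphic2_on :: "(complex \<times> complex \<Rightarrow> complex) \<Rightarrow> (complex \<times> complex) set \<Rightarrow> bool" where
  "holomorphic2_on f U \<longleftrightarrow>
     (\<forall>z\<in>U. \<exists>a b. (f has_derivative (\<lambda>(u, v). a * u + b * v)) (at z))"

definition moebius_dist :: "complex \<Rightarrow> complex \<Rightarrow> real" where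
  "moebius_dist a b = cmod (a - b) / cmod (1 - cnj b * a)"

definition poincare_dist :: "complex \<Rightarrow> complex \<Rightarrow> real" where
  "poincare_dist a b = artanh (moebius_dist a b)"

definition carath_G2 :: "complex \<times> complex \<Rightarrow> complex \<times> complex \<Rightarrow> real" where
  "carath_G2 z w = Sup {poincare_dist (f z) (f w) | f.
      holomorphic2_on f G2 \<and> f ` G2 \<subseteq> unit_disc}"

text \<open>A holomorphic map D \<rightarrow> C^2 is a pair of holomorphic functions on D.\<close>
definition lempert_G2 :: "complex \<times> complex \<Rightarrow> complex \<times> complex \<Rightarrow> real" where
  "lempert_G2 z w = Inf {poincare_dist l m | l m. l \<in> unit_disc \<and> m \<in> unit_disc \<and>
      (\<exists>\<phi>1 \<phi>2. \<phi>1 holomorphic_on unit_disc \<and> \<phi>2 holomorphic_on unit_disc \<and>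
         (\<forall>t\<in>unit_disc. (\<phi>1 t, \<phi>2 t) \<in> G2) \<and>
         (\<phi>1 l, \<phi>2 l) = z \<and> (\<phi>1 m, \<phi>2 m) = w)}"

end

theory Submission
  imports Defs "HOL-Complex_Analysis.Complex_Analysis"
begin


lemma schwarz_pick:
  assumes hol: "g holomorphic_on ball 0 1" and into: "\<And>z. norm z < 1 \<Longrightarrow> norm (g z) < 1"
    and l: "norm l < 1" and m: "norm m < 1"
  shows "moebius_dist (g l) (g m) \<le> moebius_dist l m"
proof -
  define M where "M = Moebius_function 0"
  define h where "h = (\<lambda>z. M (g l) (g (M (-l) z)))"
  have gl: "norm (g l) < 1" using into l by auto
  have hol1: "M (-l) holomorphic_on ball 0 1" unfolding M_def
    using Moebius_function_holomorphic l by simp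
  have img1: "M (-l) ` ball 0 1 \<subseteq> ball 0 1" unfolding M_def
    using Moebius_function_norm_lt_1 l by auto
  have "(g \<circ> M (-l)) holomorphic_on ball 0 1"
    using holomorphic_on_compose_gen[OF hol1 hol img1] .
  moreover have img2: "(g \<circ> M (-l)) ` ball 0 1 \<subseteq> ball 0 1"
    using img1 into by force
  moreover have hol3: "M (g l) holomorphic_on ball 0 1" unfolding M_def
    using Moebius_function_holomorphic gl by simp
  ultimately have holh: "h holomorphic_on ball 0 1"
    using holomorphic_on_compose_gen[of "g \<circ> M (-l)" "ball 0 1" "M (g l)" "ball 0 1"]
    unfolding h_def o_def by auto
  have h0: "h 0 = 0" unfolding h_def M_def
    by (simp add: Moebius_function_of_zero Moebius_function_eq_zero)
  have hno: "norm (h z) < 1" if "norm z < 1" for z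
  proof -
    have "norm (M (-l) z) < 1" using img1 that by (auto simp: image_subset_iff)
    then have "norm (g (M (-l) z)) < 1" using into by auto
    then show ?thesis unfolding h_def M_def using Moebius_function_norm_lt_1 gl by auto
  qed
  define xi where "xi = M l m"
  have xi: "norm xi < 1" unfolding xi_def M_def using Moebius_function_norm_lt_1 l m by auto
  have "M (-l) xi = m" unfolding xi_def M_def using Moebius_function_compose[of "-l" l m] l m by simp
  then have "h xi = M (g l) (g m)" unfolding h_def by simp
  with Schwarz_Lemma(1)[OF holh h0 hno xi] have le: "norm (M (g l) (g m)) \<le> norm (M l m)"
    unfolding xi_def by simp
  have e1: "norm (M w z) = moebius_dist w z" for w z
  proof -
    have "cmod (1 - cnj w * z) = cmod (cnj (1 - cnj w * z))" by (rule complex_mod_cnj[symmetric])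
    also have "\<dots> = cmod (1 - cnj z * w)" by (simp add: mult.commute)
    finally show ?thesis unfolding M_def moebius_dist_def Moebius_function_simple
      by (simp add: norm_divide norm_minus_commute)
  qed
  show ?thesis using le by (simp add: e1)
qed

lemma moebius_dist_eq: "moebius_dist w z = norm (Moebius_function 0 w z)"
proof -
  have "cmod (1 - cnj w * z) = cmod (cnj (1 - cnj w * z))" by (rule complex_mod_cnj[symmetric])
  also have "\<dots> = cmod (1 - cnj z * w)" by (simp add: mult.commute)
  finally show ?thesis unfolding moebius_dist_def Moebius_function_simple
    by (simp add: norm_divide norm_minus_commute)
qed

lemma moebius_dist_lt1: "norm w < 1 \<Longrightarrow> norm z < 1 \<Longrightarrow> moebius_dist w z < 1"
  using Moebius_function_norm_lt_1 moebius_dist_eq by simp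

lemma moebius_dist_ge0: "moebius_dist w z \<ge> 0"
  unfolding moebius_dist_def by simp

lemma artanh_mono: fixes x y :: real assumes "0 \<le> x" "x \<le> y" "y < 1" shows "artanh x \<le> artanh y"
proof -
  have p: "(1+x)*(1-y) \<le> (1+y)*(1-x)" using assms by (simp add: algebra_simps)
  have "(1+x)/(1-x) \<le> (1+y)/(1-y)" using assms p
  proof (subst frac_le_eq)
    have "1 + x * y - (x + y) = (1-x)*(1-y)" by (simp add: algebra_simps)
    moreover have "(1-x)*(1-y) > 0" using assms by simp
    ultimately show "((1 + x) * (1 - y) - (1 + y) * (1 - x)) / ((1 - x) * (1 - y)) \<le> 0"
      using p by (intro divide_nonpos_pos) auto
  qed auto
  moreover have "0 < (1+x)/(1-x)" using assms by simp
  ultimately show ?thesis unfolding artanh_def by simp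
qed

lemma comp_hol:
  assumes f: "holomorphic2_on f G2" and h1: "\<phi>1 holomorphic_on unit_disc" and h2: "\<phi>2 holomorphic_on unit_disc"
    and inG: "\<forall>t\<in>unit_disc. (\<phi>1 t, \<phi>2 t) \<in> G2"
  shows "(\<lambda>t. f (\<phi>1 t, \<phi>2 t)) holomorphic_on unit_disc"
proof -
  have op: "open unit_disc" unfolding unit_disc_def by simp
  show ?thesis unfolding holomorphic_on_open[OF op]
  proof
    fix t assume t: "t \<in> unit_disc"
    obtain d1 where d1: "(\<phi>1 has_field_derivative d1) (at t)" using h1 t op holomorphic_on_open by blast
    obtain d2 where d2: "(\<phi>2 has_field_derivative d2) (at t)" using h2 t op holomorphic_on_open by blast
    obtain a b where ab: "(f has_derivative (\<lambda>(u, v). a * u + b * v)) (at (\<phi>1 t, \<phi>2 t))"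
      using f inG t unfolding holomorphic2_on_def by blast
    have P: "((\<lambda>t. (\<phi>1 t, \<phi>2 t)) has_derivative (\<lambda>h. (d1 * h, d2 * h))) (at t)"
      using has_derivative_Pair[OF d1[unfolded has_field_derivative_def] d2[unfolded has_field_derivative_def]] .
    have "((\<lambda>t. f (\<phi>1 t, \<phi>2 t)) has_derivative (\<lambda>h. (\<lambda>(u, v). a * u + b * v) (d1 * h, d2 * h))) (at t)"
      using has_derivative_compose[OF P ab] by simp
    moreover have "(\<lambda>h. (\<lambda>(u, v). a * u + b * v) (d1 * h, d2 * h)) = (*) (a*d1 + b*d2)"
      by (auto simp: algebra_simps)
    ultimately show "\<exists>f'. ((\<lambda>t. f (\<phi>1 t, \<phi>2 t)) has_field_derivative f') (at t)"
      unfolding has_field_derivative_def by auto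
  qed
qed

lemma elem_le:
  assumes f: "holomorphic2_on f G2" "f ` G2 \<subseteq> unit_disc"
    and h1: "\<phi>1 holomorphic_on unit_disc" and h2: "\<phi>2 holomorphic_on unit_disc"
    and inG: "\<forall>t\<in>unit_disc. (\<phi>1 t, \<phi>2 t) \<in> G2" and l: "l \<in> unit_disc" and m: "m \<in> unit_disc"
  shows "poincare_dist (f (\<phi>1 l, \<phi>2 l)) (f (\<phi>1 m, \<phi>2 m)) \<le> poincare_dist l m"
proof -
  define g where "g = (\<lambda>t. f (\<phi>1 t, \<phi>2 t))"
  have hol: "g holomorphic_on ball 0 1" using comp_hol[OF f(1) h1 h2 inG] unfolding g_def unit_disc_def .
  have into: "norm (g z) < 1" if "norm z < 1" for z
  proof -
    have "z \<in> unit_disc" using that unfolding unit_disc_def by simp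
    then have "(\<phi>1 z, \<phi>2 z) \<in> G2" using inG by auto
    then have "g z \<in> unit_disc" using f(2) unfolding g_def by auto
    then show ?thesis unfolding unit_disc_def by simp
  qed
  have l1: "norm l < 1" and m1: "norm m < 1" using l m unfolding unit_disc_def by auto
  have "moebius_dist (g l) (g m) \<le> moebius_dist l m" using schwarz_pick[OF hol into l1 m1] by blast
  moreover have "moebius_dist l m < 1" using moebius_dist_lt1 l1 m1 by auto
  ultimately have "artanh (moebius_dist (g l) (g m)) \<le> artanh (moebius_dist l m)"
    using artanh_mono moebius_dist_ge0 by meson
  then show ?thesis unfolding poincare_dist_def g_def by simp
qed



lemma key_ineq:
  fixes x y :: complex assumes x: "cmod x < 1" and y: "cmod y < 1"
  shows "cmod (2*x*y - x - y) < cmod (2 - x - y)"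
proof -
  have id: "cmod (2 - x - y)^2 - cmod (2*x*y - x - y)^2 =
    4*((1-cmod x^2)*(1-Re y) + (1-cmod y^2)*(1-Re x) - (1-cmod x^2)*(1-cmod y^2))"
    unfolding cmod_power2 by (simp add: power2_eq_square algebra_simps)
  define \<alpha> where "\<alpha> = 1 - cmod x^2"
  define \<beta> where "\<beta> = 1 - cmod y^2"
  have a0: "\<alpha> > 0" unfolding \<alpha>_def using x by (simp add: power_less_one_iff abs_square_less_1)
  have b0: "\<beta> > 0" unfolding \<beta>_def using y by (simp add: abs_square_less_1)
  have rx: "1 - Re x > \<alpha>/2"
  proof -
    have "Re x \<le> cmod x" by (rule complex_Re_le_cmod)
    moreover have "(1 - cmod x)^2 > 0" using x by simp
    then have "1 - 2*cmod x + cmod x^2 > 0" by (simp add: power2_eq_square algebra_simps)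
    ultimately show ?thesis unfolding \<alpha>_def by (simp add: field_simps; linarith)
  qed
  have ry: "1 - Re y > \<beta>/2"
  proof -
    have "Re y \<le> cmod y" by (rule complex_Re_le_cmod)
    moreover have "(1 - cmod y)^2 > 0" using y by simp
    then have "1 - 2*cmod y + cmod y^2 > 0" by (simp add: power2_eq_square algebra_simps)
    ultimately show ?thesis unfolding \<beta>_def by (simp add: field_simps; linarith)
  qed
  have "\<alpha>*(1-Re y) > \<alpha>*(\<beta>/2)" using a0 ry by simp
  moreover have "\<beta>*(1-Re x) > \<beta>*(\<alpha>/2)" using b0 rx by simp
  ultimately have "\<alpha>*(1-Re y) + \<beta>*(1-Re x) - \<alpha>*\<beta> > 0" by (simp add: algebra_simps)
  then have "cmod (2*x*y - x - y)^2 < cmod (2 - x - y)^2" using id unfolding \<alpha>_def \<beta>_def by simp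
  then show ?thesis using power2_less_imp_less by fastforce
qed

definition Phi :: "complex \<Rightarrow> complex \<times> complex \<Rightarrow> complex" where
  "Phi w z = (2*w* snd z - fst z)/(2 - w * fst z)"

lemma G2_elim: assumes "(s,p) \<in> G2"
  obtains a b where "s = a+b" "p = a*b" "cmod a < 1" "cmod b < 1"
  using assms unfolding G2_def unit_disc_def by auto

lemma Phi_den: assumes w: "cmod w = 1" and G: "(s,p) \<in> G2" shows "2 - w* s \<noteq> 0"
proof -
  obtain a b where ab: "s = a+b" "p = a*b" "cmod a < 1" "cmod b < 1" using G G2_elim by blast
  have "cmod (w* s) \<le> cmod a + cmod b" using w ab norm_triangle_ineq[of a b] by (simp add: norm_mult)
  then have "cmod (w* s) < 2" using ab by linarith
  then show ?thesis by auto
qed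

lemma Phi_into: assumes w: "cmod w = 1" and G: "(s,p) \<in> G2" shows "cmod (Phi w (s,p)) < 1"
proof -
  obtain a b where ab: "s = a+b" "p = a*b" "cmod a < 1" "cmod b < 1" using G G2_elim by blast
  define x where "x = w*a"
  define y where "y = w*b"
  have x: "cmod x < 1" and y: "cmod y < 1" using ab w unfolding x_def y_def by (auto simp: norm_mult)
  have w0: "w \<noteq> 0" using w by auto
  have D1: "2 - w * (a+b) \<noteq> 0" using Phi_den[OF w G] ab by simp
  then have D2: "2 - (a * w + b * w) \<noteq> 0" by (simp add: algebra_simps)
  have e1: "2*x*y - x - y = w*(2*w*(a*b) - (a+b))" by (simp add: x_def y_def algebra_simps)
  have e2: "2 - x - y = 2 - w*(a+b)" by (simp add: x_def y_def algebra_simps)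
  have "Phi w (s,p) = (2*w*(a*b) - (a+b))/(2 - w*(a+b))" by (simp add: Phi_def ab)
  then have "cmod (Phi w (s,p)) = cmod (2*x*y - x - y)/cmod (2 - x - y)"
    unfolding e1 e2 using w by (simp add: norm_divide norm_mult)
  moreover have "cmod (2*x*y - x - y) < cmod (2 - x - y)" using key_ineq[OF x y] .
  ultimately show ?thesis by (simp add: divide_less_eq)
qed

lemma Phi_hol: assumes w: "cmod w = 1" shows "holomorphic2_on (Phi w) G2"
  unfolding holomorphic2_on_def
proof
  fix z assume z: "z \<in> G2"
  obtain s p where zsp: "z = (s,p)" by fastforce
  have D: "2 - w* s \<noteq> 0" using Phi_den w z zsp by blast
  define N where "N = 2*w*p - s"
  define Dn where "Dn = 2 - w* s"
  have f1: "((\<lambda>z. 2*w * snd z - fst z) has_derivative (\<lambda>h. 2*w * snd h - fst h)) (at (s,p))"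
    by (auto intro!: derivative_eq_intros)
  have g1: "((\<lambda>z. 2 - w * fst z) has_derivative (\<lambda>h. - (w * fst h))) (at (s,p))"
    by (auto intro!: derivative_eq_intros)
  have der: "(Phi w has_derivative (\<lambda>h. - N * (inverse Dn * (- (w * fst h)) * inverse Dn) + (2*w * snd h - fst h) / Dn)) (at z)"
    unfolding Phi_def[abs_def] N_def Dn_def zsp
    using has_derivative_divide[OF f1 g1] D by simp
  have eq: "(\<lambda>h. - N * (inverse Dn * (- (w * fst h)) * inverse Dn) + (2*w * snd h - fst h) / Dn)
     = (\<lambda>(u, v). ((w*N - Dn)/Dn^2) * u + (2*w/Dn) * v)"
    using D unfolding Dn_def[symmetric] by (auto simp: field_simps power2_eq_square)
  have "(Phi w has_derivative (\<lambda>(u, v). ((w*N - Dn)/Dn^2) * u + (2*w/Dn) * v)) (at z)"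
    using der by (simp only: eq)
  then show "\<exists>a b. (Phi w has_derivative (\<lambda>(u, v). a * u + b * v)) (at z)" by blast
qed

lemma G2_crit: assumes G: "(s,p) \<in> G2"
  shows "cmod p < 1" "cmod (s - p * cnj s) < 1 - (cmod p)^2"
proof -
  obtain a b where ab: "s = a+b" "p = a*b" "cmod a < 1" "cmod b < 1" using G G2_elim by blast
  define x where "x = cmod a"
  define y where "y = cmod b"
  have x: "0 \<le> x" "x < 1" and y: "0 \<le> y" "y < 1" using ab unfolding x_def y_def by auto
  have "x*y \<le> x" using x y by (simp add: mult_left_le)
  then have "x*y < 1" using x by linarith
  then show "cmod p < 1" using ab unfolding x_def y_def by (simp add: norm_mult)
  have "s - p * cnj s = a * (1 - b * cnj b) + b * (1 - a * cnj a)" unfolding ab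
    by (simp add: algebra_simps)
  also have "\<dots> = a * of_real (1 - y^2) + b * of_real (1 - x^2)"
    unfolding x_def y_def by (simp only: of_real_diff of_real_1 complex_norm_square)
  finally have eq: "s - p * cnj s = a * of_real (1 - y^2) + b * of_real (1 - x^2)" .
  have y2: "0 \<le> 1 - y^2" using y by (simp add: abs_square_le_1 power_le_one)
  have x2: "0 \<le> 1 - x^2" using x by (simp add: abs_square_le_1 power_le_one)
  have n1: "norm (complex_of_real (1 - y^2)) = 1 - y^2" using y2 by (simp only: norm_of_real abs_of_nonneg)
  have n2: "norm (complex_of_real (1 - x^2)) = 1 - x^2" using x2 by (simp only: norm_of_real abs_of_nonneg)
  have "cmod (s - p * cnj s) \<le> norm (a * of_real (1 - y^2)) + norm (b * of_real (1 - x^2))"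
    unfolding eq by (rule norm_triangle_ineq)
  also have "\<dots> = x * (1 - y^2) + y * (1 - x^2)"
    by (simp only: norm_mult n1 n2) (simp add: x_def y_def)
  finally have "cmod (s - p * cnj s) \<le> x * (1 - y^2) + y * (1 - x^2)" .
  moreover have "1 - x^2*y^2 - (x * (1 - y^2) + y * (1 - x^2)) = (1-x)*(1-y)*(1-x*y)"
    by (simp add: algebra_simps power2_eq_square)
  moreover have "(1-x)*(1-y)*(1-x*y) > 0" using x y \<open>x*y < 1\<close> by simp
  moreover have "(cmod p)^2 = x^2*y^2" using ab unfolding x_def y_def by (simp add: norm_mult power_mult_distrib)
  ultimately show "cmod (s - p * cnj s) < 1 - (cmod p)^2" by linarith
qed

lemma exists_wk: assumes G: "(s0,p0) \<in> G2"
  shows "\<exists>w (k::real). cmod w = 1 \<and> 0 \<le> k \<and> k \<le> 1 \<and>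
           of_real k * (2 - w * s0) * (2*w*p0 - s0) = w * (4*p0 - s0^2)"
proof (cases "s0 = 0")
  case True
  then show ?thesis by (intro exI[of _ 1]) simp
next
  case s0: False
  show ?thesis
  proof (cases "4*p0 - s0^2 = 0")
    case True
    then show ?thesis by (intro exI[of _ 1] exI[of _ 0]) simp
  next
    case q0: False
    define q where "q = 4*p0 - s0^2"
    have q0': "q \<noteq> 0" using q0 unfolding q_def .
    define d where "d = q / s0"
    have d0: "d \<noteq> 0" using q0' s0 unfolding d_def by simp
    define R where "R = 1 - (cmod p0)^2"
    have p1: "cmod p0 < 1" and crit: "cmod (s0 - p0 * cnj s0) < R"
      using G2_crit[OF G] unfolding R_def by auto
    have R0: "R > 0" using crit by (meson norm_ge_zero le_less_trans)
    define W where "W = (\<lambda>\<tau>::real. s0 - of_real \<tau> * d)"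
    define F where "F = (\<lambda>\<tau>. cmod (cnj (W \<tau>) - cnj p0 * W \<tau>))"
    have "cnj s0 - cnj p0 * s0 = cnj (s0 - p0 * cnj s0)" by simp
    then have "F 0 = cmod (s0 - p0 * cnj s0)" unfolding F_def W_def
      by (simp only: of_real_0 mult_zero_left diff_zero complex_mod_cnj)
    then have F0: "F 0 \<le> R" using crit by simp
    define T where "T = (2 + cmod s0)/cmod d"
    have T0: "T \<ge> 0" unfolding T_def by simp
    have FT: "R \<le> F T"
    proof -
      have "cmod (of_real T * d) = T * cmod d" using T0 by (simp add: norm_mult)
      also have "\<dots> = 2 + cmod s0" unfolding T_def using d0 by simp
      finally have "cmod (of_real T * d) = 2 + cmod s0" .
      moreover have "cmod (of_real T * d) - cmod s0 \<le> cmod (W T)"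
        unfolding W_def using norm_triangle_ineq2[of "of_real T * d" s0] by (simp add: norm_minus_commute)
      ultimately have WT: "cmod (W T) \<ge> 2" by simp
      have "cmod (cnj (W T)) - cmod (cnj p0 * W T) \<le> F T"
        unfolding F_def by (rule norm_triangle_ineq2)
      then have "(1 - cmod p0) * cmod (W T) \<le> F T" by (simp add: norm_mult algebra_simps)
      moreover have "(1 - cmod p0) * 2 \<le> (1 - cmod p0) * cmod (W T)"
        using WT p1 by (intro mult_left_mono) auto
      moreover have "R \<le> (1 - cmod p0) * 2"
      proof -
        have "R = (1 - cmod p0) * (1 + cmod p0)" unfolding R_def by (simp add: algebra_simps power2_eq_square)
        also have "\<dots> \<le> (1 - cmod p0) * 2" using p1 by (intro mult_left_mono) auto
        finally show ?thesis .
      qed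
      ultimately show ?thesis by linarith
    qed
    have cont: "continuous_on {0..T} F" unfolding F_def W_def by (intro continuous_intros)
    obtain \<tau> where tau: "0 \<le> \<tau>" "\<tau> \<le> T" "F \<tau> = R" using IVT'[of F 0 R T, OF F0 FT T0 cont] by auto
    define w where "w = (cnj (W \<tau>) - cnj p0 * W \<tau>) / of_real R"
    have w1: "cmod w = 1" unfolding w_def using tau R0 by (simp add: norm_divide F_def)
    have pr: "complex_of_real R = 1 - p0 * cnj p0" unfolding R_def
      by (simp only: of_real_diff of_real_1 complex_norm_square)
    have Rn0: "complex_of_real R \<noteq> 0" using R0 by simp
    have cw: "cnj w + w * p0 = W \<tau>"
    proof -
      have "cnj w = (W \<tau> - p0 * cnj (W \<tau>)) / of_real R" unfolding w_def by simp
      then have "cnj w + w * p0 = ((W \<tau> - p0 * cnj (W \<tau>)) + (cnj (W \<tau>) - cnj p0 * W \<tau>) * p0) / of_real R"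
        unfolding w_def by (simp add: add_divide_distrib)
      also have "\<dots> = W \<tau> * (1 - p0 * cnj p0) / of_real R" by (simp add: algebra_simps)
      also have "\<dots> = W \<tau>" using Rn0 unfolding pr[symmetric] by simp
      finally show ?thesis .
    qed
    have wn0: "w \<noteq> 0" using w1 by auto
    have "w * cnj w = 1" using w1 complex_norm_square[of w] by simp
    then have wc: "cnj w = 1/w" using wn0 by (simp add: field_simps)
    have E: "1/w + w*p0 = s0 - of_real \<tau> * (q/s0)" using cw wc unfolding W_def d_def by simp
    have E2: "s0 + w^2*p0* s0 = w* s0^2 - of_real \<tau>*w*q"
    proof -
      have "(1/w + w*p0) * (w* s0) = (s0 - of_real \<tau> * (q/s0)) * (w* s0)" using E by simp
      moreover have "(1/w + w*p0) * (w* s0) = s0 + w^2*p0* s0" using wn0 by (simp add: field_simps power2_eq_square)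
      moreover have "(s0 - of_real \<tau> * (q/ s0)) * (w* s0) = w* s0^2 - of_real \<tau>*w*q"
        using s0 by (simp add: field_simps power2_eq_square)
      ultimately show ?thesis by simp
    qed
    have E3: "(2 - w* s0)*(2*w*p0 - s0) = (1 + 2* of_real \<tau>)*w*q"
      using E2 unfolding q_def by algebra
    define k where "k = 1/(1+2*\<tau>)"
    have k01: "0 \<le> k" "k \<le> 1" unfolding k_def using tau by auto
    have "of_real k * (1 + 2* complex_of_real \<tau>) = 1" unfolding k_def using tau
      by (simp add: field_simps) (metis of_real_1 of_real_add of_real_mult of_real_numeral of_real_eq_0_iff add_nonneg_eq_0_iff mult_nonneg_nonneg zero_le_numeral one_neq_zero zero_le_one)
    then have "of_real k * (2 - w * s0) * (2*w*p0 - s0) = w * q"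
      using E3 by (metis mult.assoc mult_1)
    then show ?thesis using w1 k01 unfolding q_def by blast
  qed
qed

lemma norm_frac_le: fixes r :: real assumes r: "\<bar>r\<bar> \<le> 1" and u: "cmod u < 1"
  shows "cmod (u + of_real r) \<le> cmod (1 + of_real r * u)"
proof -
  have "cmod (1 + of_real r * u)^2 - cmod (u + of_real r)^2 = (1 - r^2) * (1 - cmod u^2)"
    unfolding cmod_power2 by (simp add: power2_eq_square algebra_simps)
  moreover have "0 \<le> 1 - r^2" using r by (simp add: abs_square_le_1)
  moreover have "0 \<le> 1 - cmod u^2" using u by (simp add: abs_square_le_1 less_imp_le)
  ultimately have "cmod (u + of_real r)^2 \<le> cmod (1 + of_real r * u)^2"
    by (metis diff_ge_0_iff_ge mult_nonneg_nonneg)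
  then show ?thesis using power2_le_imp_le by fastforce
qed

definition phi1 :: "complex \<Rightarrow> real \<Rightarrow> complex \<Rightarrow> complex" where
  "phi1 w k t = -2*(1 - of_real k)*t/(w*(1 + of_real k * t))"
definition phi2 :: "complex \<Rightarrow> real \<Rightarrow> complex \<Rightarrow> complex" where
  "phi2 w k t = t*(t + of_real k)/(w^2*(1 + of_real k * t))"

lemma den_nz: assumes "0 \<le> k" "k \<le> 1" "cmod t < 1" shows "1 + complex_of_real k * t \<noteq> 0"
proof
  assume "1 + complex_of_real k * t = 0"
  then have "complex_of_real k * t = -1" by (simp add: add_eq_0_iff)
  then have "cmod (complex_of_real k * t) = 1" by simp
  moreover have "cmod (complex_of_real k * t) < 1"
  proof -
    have "cmod (complex_of_real k * t) = k * cmod t" using assms by (simp add: norm_mult)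
    also have "\<dots> \<le> cmod t" using assms by (simp add: mult_left_le_one_le)
    finally show ?thesis using assms by simp
  qed
  ultimately show False by simp
qed

lemma disc_hol: assumes "cmod w = 1" "0 \<le> k" "k \<le> 1"
  shows "phi1 w k holomorphic_on unit_disc" "phi2 w k holomorphic_on unit_disc"
proof -
  have w0: "w \<noteq> 0" using assms by auto
  have d: "\<And>t. t \<in> unit_disc \<Longrightarrow> 1 + complex_of_real k * t \<noteq> 0" using den_nz assms unfolding unit_disc_def by auto
  show "phi1 w k holomorphic_on unit_disc" unfolding phi1_def[abs_def]
    using d w0 by (intro holomorphic_intros) auto
  show "phi2 w k holomorphic_on unit_disc" unfolding phi2_def[abs_def]
    using d w0 by (intro holomorphic_intros) auto
qed

lemma disc_in: assumes w: "cmod w = 1" and k: "0 \<le> k" "k \<le> 1" and t: "t \<in> unit_disc"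
  shows "(phi1 w k t, phi2 w k t) \<in> G2"
proof -
  have t1: "cmod t < 1" using t unfolding unit_disc_def by simp
  define u where "u = csqrt (-t)"
  have u2: "u^2 = -t" unfolding u_def by simp
  have u1: "cmod u < 1" unfolding u_def using t1 by (simp add: real_sqrt_lt_1_iff)
  define r where "r = sqrt k"
  have r01: "0 \<le> r" "r \<le> 1" unfolding r_def using k by auto
  have r2: "(complex_of_real r)^2 = complex_of_real k" unfolding r_def using k
    by (metis of_real_power real_sqrt_pow2)
  have w0: "w \<noteq> 0" using w by auto
  have dp: "1 + complex_of_real r * u \<noteq> 0" using den_nz[of r u] r01 u1 by simp
  have dm: "1 - complex_of_real r * u \<noteq> 0" using den_nz[of r "-u"] r01 u1 by simp
  define l1 where "l1 = u*(u + of_real r)/(w*(1 + of_real r * u))"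
  define l2 where "l2 = u*(u - of_real r)/(w*(1 - of_real r * u))"
  have n1: "cmod l1 < 1"
  proof -
    have "cmod l1 = cmod u * (cmod (u + of_real r) / cmod (1 + of_real r * u))"
      unfolding l1_def using w by (simp add: norm_mult norm_divide)
    also have "\<dots> \<le> cmod u * 1"
      using norm_frac_le[of r u] r01 u1 dp by (intro mult_left_mono) (auto simp: divide_le_eq)
    finally show ?thesis using u1 by simp
  qed
  have n2: "cmod l2 < 1"
  proof -
    have "cmod l2 = cmod u * (cmod (u + of_real (-r)) / cmod (1 + of_real (-r) * u))"
      unfolding l2_def using w by (simp add: norm_mult norm_divide)
    also have "\<dots> \<le> cmod u * 1"
      using norm_frac_le[of "-r" u] r01 u1 dm by (intro mult_left_mono) (auto simp: divide_le_eq)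
    finally show ?thesis using u1 by simp
  qed
  define R where "R = complex_of_real r"
  have tt: "t = - (u^2)" using u2 by simp
  have kk: "complex_of_real k = R^2" using r2 unfolding R_def by simp
  have dp': "1 + R * u \<noteq> 0" and dm': "1 - R * u \<noteq> 0" using dp dm unfolding R_def by auto
  have tk: "1 + R^2 * - (u^2) = (1+R*u)*(1-R*u)" by (simp add: algebra_simps power2_eq_square)
  have s: "l1 + l2 = phi1 w k t"
    unfolding l1_def l2_def phi1_def R_def[symmetric] kk tt tk
    using w0 dp' dm' by (subst add_frac_eq, simp, simp, subst frac_eq_eq, simp, simp, simp add: algebra_simps power2_eq_square)
  have p: "l1 * l2 = phi2 w k t"
    unfolding l1_def l2_def phi2_def R_def[symmetric] kk tt tk
    using w0 dp' dm' by (simp add: field_simps) (simp add: algebra_simps power2_eq_square eval_nat_numeral)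
  show ?thesis unfolding G2_def unit_disc_def using s p n1 n2 by force
qed

lemma disc_hits:
  assumes w: "cmod w = 1" and k: "0 \<le> k" "k \<le> 1" and G: "(s0,p0) \<in> G2"
    and c: "of_real k * (2 - w * s0) * (2*w*p0 - s0) = w * (4*p0 - s0^2)"
    and m: "m = w * Phi w (s0,p0)"
  shows "phi1 w k m = s0" "phi2 w k m = p0" "m \<in> unit_disc"
proof -
  define K where "K = complex_of_real k"
  have Dn: "2 - w * s0 \<noteq> 0" using Phi_den[OF w G] .
  have w0: "w \<noteq> 0" using w by auto
  have mD: "m * (2 - w * s0) = w * (2*w*p0 - s0)" unfolding m Phi_def using Dn by simp
  have m1: "cmod m < 1" unfolding m using Phi_into[OF w G] w by (simp add: norm_mult)
  then show "m \<in> unit_disc" unfolding unit_disc_def by simp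
  have dk: "1 + K * m \<noteq> 0" unfolding K_def using den_nz k m1 by blast
  have c': "K * (2 - w * s0) * (2*w*p0 - s0) = w * (4*p0 - s0^2)" using c unfolding K_def .
  have X: "(-2*(1 - K)*m - s0*w*(1 + K*m)) * (2 - w * s0) = 0"
    using mD c' by algebra
  then have eq1: "-2*(1 - K)*m = s0*w*(1 + K*m)" using Dn by simp
  have wd: "w * (1 + K*m) \<noteq> 0" using w0 dk by simp
  have "phi1 w k m = (-2*(1 - K)*m)/(w*(1 + K*m))" unfolding phi1_def K_def by simp
  also have "\<dots> = (s0*w*(1 + K*m))/(w*(1 + K*m))" by (simp only: eq1)
  also have "\<dots> = s0" by (simp only: mult.assoc nonzero_mult_div_cancel_right[OF wd])
  finally show "phi1 w k m = s0" .
  have Y: "(m*(m + K) - p0*w^2*(1 + K*m)) * (2 - w * s0)^2 = 0"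
    using mD c' by algebra
  then have eq2: "m*(m + K) = p0*(w^2*(1 + K*m))" using Dn by (simp add: mult.assoc)
  have wd2: "w^2 * (1 + K*m) \<noteq> 0" using w0 dk by simp
  have "phi2 w k m = (m*(m + K))/(w^2*(1 + K*m))" unfolding phi2_def K_def by simp
  also have "\<dots> = (p0*(w^2*(1 + K*m)))/(w^2*(1 + K*m))" by (simp only: eq2)
  also have "\<dots> = p0" by (simp only: nonzero_mult_div_cancel_right[OF wd2])
  finally show "phi2 w k m = p0" .
qed

theorem mainTheorem7:
  fixes s0 p0 :: complex
  assumes "(s0, p0) \<in> G2"
  shows "carath_G2 (0, 0) (s0, p0) = lempert_G2 (0, 0) (s0, p0)"
proof -
  obtain w k where w: "cmod w = 1" and k: "0 \<le> k" "k \<le> 1"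
    and c: "of_real k * (2 - w * s0) * (2*w*p0 - s0) = w * (4*p0 - s0^2)"
    using exists_wk[OF assms] by blast
  define m where "m = w * Phi w (s0,p0)"
  note hits = disc_hits[OF w k assms c m_def]
  define Cs where "Cs = {poincare_dist (f (0,0)) (f (s0,p0)) | f.
      holomorphic2_on f G2 \<and> f ` G2 \<subseteq> unit_disc}"
  define Ks where "Ks = {poincare_dist l m | l m. l \<in> unit_disc \<and> m \<in> unit_disc \<and>
      (\<exists>\<phi>1 \<phi>2. \<phi>1 holomorphic_on unit_disc \<and> \<phi>2 holomorphic_on unit_disc \<and>
         (\<forall>t\<in>unit_disc. (\<phi>1 t, \<phi>2 t) \<in> G2) \<and>
         (\<phi>1 l, \<phi>2 l) = (0,0) \<and> (\<phi>1 m, \<phi>2 m) = (s0,p0))}"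
  define e where "e = poincare_dist 0 m"
  have pd0: "poincare_dist 0 x = artanh (cmod x)" for x unfolding poincare_dist_def moebius_dist_def by simp
  have eC: "e \<in> Cs"
  proof -
    have "Phi w (0,0) = 0" unfolding Phi_def by simp
    moreover have "cmod (Phi w (s0,p0)) = cmod m" unfolding m_def using w by (simp add: norm_mult)
    ultimately have "e = poincare_dist (Phi w (0,0)) (Phi w (s0,p0))" unfolding e_def by (simp add: pd0)
    moreover have "holomorphic2_on (Phi w) G2" using Phi_hol[OF w] .
    moreover have "Phi w ` G2 \<subseteq> unit_disc" unfolding unit_disc_def using Phi_into[OF w] by auto
    ultimately show ?thesis unfolding Cs_def by blast
  qed
  have eK: "e \<in> Ks"
  proof -
    have "(phi1 w k 0, phi2 w k 0) = (0,0)" unfolding phi1_def phi2_def by simp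
    moreover have "(phi1 w k m, phi2 w k m) = (s0,p0)" using hits by simp
    moreover have "(0::complex) \<in> unit_disc" unfolding unit_disc_def by simp
    moreover have "\<forall>t\<in>unit_disc. (phi1 w k t, phi2 w k t) \<in> G2" using disc_in[OF w k] by blast
    ultimately show ?thesis unfolding Ks_def e_def using disc_hol[OF w k] hits(3) by blast
  qed
  have le: "c \<le> x" if cC: "c \<in> Cs" and xK: "x \<in> Ks" for c x
  proof -
    obtain f where f: "c = poincare_dist (f (0,0)) (f (s0,p0))" "holomorphic2_on f G2" "f ` G2 \<subseteq> unit_disc"
      using cC unfolding Cs_def by blast
    obtain l m' \<phi>1 \<phi>2 where x: "x = poincare_dist l m'" "l \<in> unit_disc" "m' \<in> unit_disc"
      "\<phi>1 holomorphic_on unit_disc" "\<phi>2 holomorphic_on unit_disc"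
      "\<forall>t\<in>unit_disc. (\<phi>1 t, \<phi>2 t) \<in> G2" "(\<phi>1 l, \<phi>2 l) = (0,0)" "(\<phi>1 m', \<phi>2 m') = (s0,p0)"
      using xK unfolding Ks_def by blast
    have "poincare_dist (f (\<phi>1 l, \<phi>2 l)) (f (\<phi>1 m', \<phi>2 m')) \<le> poincare_dist l m'"
      using elem_le[OF f(2,3) x(4,5,6,2,3)] .
    then show ?thesis using f(1) x(1,7,8) by simp
  qed
  have "Sup Cs = e" by (rule cSup_eq_maximum[OF eC]) (use le eK in blast)
  moreover have "Inf Ks = e" by (rule cInf_eq_minimum[OF eK]) (use le eC in blast)
  ultimately show ?thesis unfolding carath_G2_def lempert_G2_def Cs_def Ks_def by simp
qed

end
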